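(* Consider the following random process. A segment of length $1$ is split into $3$ pieces by choosing two independent uniformly random points on it. If the three pieces can form a (nondegenerate) triangle, the process stops. Otherwise, the longest of the three pieces is taken and split into $3$ pieces in the same way (two independent uniformly random points on that piece), and one again checks whether these three pieces form a triangle; this is repeated until a triangle is formed. Then the expected perimeter of the triangle formed at the end of the process is $\frac12$, and its expected area is $\frac{8\pi}{2205}$.
   Context: Three lengths form a triangle iff each is less than the sum of the other two. *)

theory Defs
  imports "HOL-Probability.Probability"
begin

definition is_triangle :: "real \<Rightarrow> real \<Rightarrow> real \<Rightarrow> bool" where
  "is_triangle a b c \<longleftrightarrow> a < b + c \<and> b < a + c \<and> c < a + b"

definition tri_area :: "real \<Rightarrow> real \<Rightarrow> real \<Rightarrow> real" where
  "tri_area a b c = (let s = (a + b + c) / 2 in sqrt (s * (s - a) * (s - b) * (s - c)))"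

text \<open>Sample space: an i.i.d. sequence of uniform points in [0,1]. At step k the
  two cut points are u (2k) and u (2k+1), measured relative to the piece being cut.\<close>
definition Omega :: "(nat \<Rightarrow> real) measure" where
  "Omega = PiM UNIV (\<lambda>_. uniform_measure lborel {0..1::real})"

definition piece1 :: "real \<Rightarrow> real \<Rightarrow> real" where "piece1 x y = min x y"
definition piece2 :: "real \<Rightarrow> real \<Rightarrow> real" where "piece2 x y = \<bar>x - y\<bar>"
definition piece3 :: "real \<Rightarrow> real \<Rightarrow> real" where "piece3 x y = 1 - max x y"

definition rel_tri :: "(nat \<Rightarrow> real) \<Rightarrow> nat \<Rightarrow> bool" where
  "rel_tri u k = is_triangle (piece1 (u (2*k)) (u (2*k+1))) (piece2 (u (2*k)) (u (2*k+1)))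
                              (piece3 (u (2*k)) (u (2*k+1)))"

fun seg_len :: "(nat \<Rightarrow> real) \<Rightarrow> nat \<Rightarrow> real" where
  "seg_len u 0 = 1"
| "seg_len u (Suc k) = seg_len u k *
     max (piece1 (u (2*k)) (u (2*k+1))) (max (piece2 (u (2*k)) (u (2*k+1))) (piece3 (u (2*k)) (u (2*k+1))))"

definition stop_time :: "(nat \<Rightarrow> real) \<Rightarrow> nat" where
  "stop_time u = (LEAST k. rel_tri u k)"

definition final_sides :: "(nat \<Rightarrow> real) \<Rightarrow> real \<times> real \<times> real" where
  "final_sides u = (let k = stop_time u; L = seg_len u k; x = u (2*k); y = u (2*k+1) in
     (L * piece1 x y, L * piece2 x y, L * piece3 x y))"

definition final_perimeter :: "(nat \<Rightarrow> real) \<Rightarrow> real" where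
  "final_perimeter u = (case final_sides u of (a, b, c) \<Rightarrow> a + b + c)"

definition final_area :: "(nat \<Rightarrow> real) \<Rightarrow> real" where
  "final_area u = (case final_sides u of (a, b, c) \<Rightarrow> tri_area a b c)"

end

theory Submission
  imports Defs
begin

definition U :: "real measure" where "U = uniform_measure lborel {0..1::real}"

lemma prob_U: "prob_space U"
  unfolding U_def by (rule prob_space_uniform_measure) auto

interpretation PU: prob_space U by (rule prob_U)
interpretation US: sequence_space U by unfold_locales

lemma Omega_eq: "Omega = US.S" unfolding Omega_def U_def ..

lemma sets_U[simp, measurable_cong]: "sets U = sets borel"
  unfolding U_def by simp

lemma space_U[simp]: "space U = UNIV" unfolding U_def by simp

lemma step1:
  assumes [measurable]: "f \<in> borel_measurable US.S"
  shows "(\<integral>\<^sup>+w. f w \<partial>US.S) = (\<integral>\<^sup>+x. (\<integral>\<^sup>+w. f (case_nat x w) \<partial>US.S) \<partial>U)"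
proof -
  interpret P: pair_sigma_finite U US.S ..
  have "(\<integral>\<^sup>+w. f w \<partial>US.S) = (\<integral>\<^sup>+X. f ((\<lambda>(s, \<omega>). case_nat s \<omega>) X) \<partial>(U \<Otimes>\<^sub>M US.S))"
    by (subst US.PiM_iter[symmetric]) (simp add: nn_integral_distr)
  also have "\<dots> = (\<integral>\<^sup>+x. \<integral>\<^sup>+X. f ((\<lambda>(s, \<omega>). case_nat s \<omega>) (x, X)) \<partial>US.S \<partial>U)"
    by (rule US.nn_integral_fst[symmetric]) measurable
  finally show ?thesis by simp
qed

definition cons2 :: "real \<Rightarrow> real \<Rightarrow> (nat \<Rightarrow> real) \<Rightarrow> nat \<Rightarrow> real" where
  "cons2 x y w = case_nat x (case_nat y w)"

definition tri :: "real \<Rightarrow> real \<Rightarrow> bool" where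
  "tri x y = is_triangle (piece1 x y) (piece2 x y) (piece3 x y)"
definition MM :: "real \<Rightarrow> real \<Rightarrow> real" where
  "MM x y = max (piece1 x y) (max (piece2 x y) (piece3 x y))"
definition AA :: "real \<Rightarrow> real \<Rightarrow> real" where
  "AA x y = tri_area (piece1 x y) (piece2 x y) (piece3 x y)"

lemma meas_tri[measurable (raw)]: assumes [measurable]: "f \<in> borel_measurable M" "g \<in> borel_measurable M" shows "Measurable.pred M (\<lambda>z. tri (f z) (g z))"
  unfolding tri_def is_triangle_def piece1_def piece2_def piece3_def by measurable
lemma meas_MM[measurable (raw)]: assumes [measurable]: "f \<in> borel_measurable M" "g \<in> borel_measurable M" shows "(\<lambda>z. MM (f z) (g z)) \<in> borel_measurable M"
  unfolding MM_def piece1_def piece2_def piece3_def by measurable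
lemma meas_AA[measurable (raw)]: assumes [measurable]: "f \<in> borel_measurable M" "g \<in> borel_measurable M" shows "(\<lambda>z. AA (f z) (g z)) \<in> borel_measurable M"
  unfolding AA_def tri_area_def Let_def piece1_def piece2_def piece3_def by measurable

lemma cons2_simps[simp]: "cons2 x y w 0 = x" "cons2 x y w (Suc 0) = y"
  "cons2 x y w (Suc (Suc n)) = w n"
  by (simp_all add: cons2_def)

lemma two_Suc: "2 * Suc k = Suc (Suc (2*k))" "Suc (Suc n) + 1 = Suc (Suc (n + 1))" by simp_all

lemma rel_tri_cons0[simp]: "rel_tri (cons2 x y w) 0 = tri x y"
  by (simp add: rel_tri_def tri_def)
lemma rel_tri_consS[simp]: "rel_tri (cons2 x y w) (Suc k) = rel_tri w k"
  unfolding rel_tri_def by (simp only: two_Suc(2) two_Suc(1) cons2_simps)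

lemma seg_len_cons: "seg_len (cons2 x y w) (Suc k) = MM x y * seg_len w k"
proof (induction k)
  case 0 then show ?case by (simp add: MM_def)
next
  case (Suc k)
  have "seg_len (cons2 x y w) (Suc (Suc k)) = seg_len (cons2 x y w) (Suc k) *
     max (piece1 (cons2 x y w (2*Suc k)) (cons2 x y w (2*Suc k+1)))
       (max (piece2 (cons2 x y w (2*Suc k)) (cons2 x y w (2*Suc k+1)))
            (piece3 (cons2 x y w (2*Suc k)) (cons2 x y w (2*Suc k+1))))"
    by (simp only: seg_len.simps)
  also have "\<dots> = MM x y * seg_len w (Suc k)"
    by (simp only: two_Suc(2) two_Suc(1) cons2_simps Suc) (simp add: MM_def mult.assoc)
  finally show ?case .
qed

lemma stop_cons_tri: "tri x y \<Longrightarrow> stop_time (cons2 x y w) = 0"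
  unfolding stop_time_def by (rule Least_eq_0) simp

lemma stop_cons_ntri: "\<not> tri x y \<Longrightarrow> \<exists>k. rel_tri w k \<Longrightarrow> stop_time (cons2 x y w) = Suc (stop_time w)"
  unfolding stop_time_def
  by (subst Least_Suc[where n = "Suc (LEAST k. rel_tri w k)"]) (auto intro: LeastI_ex)

lemma pieces_sum: "piece1 x y + piece2 x y + piece3 x y = 1"
  unfolding piece1_def piece2_def piece3_def by (auto simp: min_def max_def)

lemma MM_nonneg: "0 \<le> MM x y"
  unfolding MM_def piece2_def by (auto simp: max_def)

lemma perim_tri: "tri x y \<Longrightarrow> final_perimeter (cons2 x y w) = 1"
  unfolding final_perimeter_def final_sides_def using pieces_sum[of x y]
  by (simp add: stop_cons_tri Let_def algebra_simps)

lemma area_tri: "tri x y \<Longrightarrow> final_area (cons2 x y w) = AA x y"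
  unfolding final_area_def final_sides_def AA_def
  by (simp add: stop_cons_tri Let_def)

lemma tri_area_scale: "0 \<le> m \<Longrightarrow> tri_area (m*a) (m*b) (m*c) = m^2 * tri_area a b c"
proof -
  assume m: "0 \<le> m"
  have eq: "((m*a + m*b + m*c)/2) * ((m*a + m*b + m*c)/2 - m*a) * ((m*a + m*b + m*c)/2 - m*b) * ((m*a + m*b + m*c)/2 - m*c)
     = (m^2)^2 * (((a+b+c)/2) * ((a+b+c)/2 - a) * ((a+b+c)/2 - b) * ((a+b+c)/2 - c))"
    by (simp add: algebra_simps power2_eq_square)
  then show ?thesis unfolding tri_area_def Let_def using m
    by (simp only: real_sqrt_mult real_sqrt_abs) simp
qed

lemma final_sides_ntri:
  assumes "\<not> tri x y" "\<exists>k. rel_tri w k"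
  shows "final_sides (cons2 x y w) = (case final_sides w of (a,b,c) \<Rightarrow> (MM x y * a, MM x y * b, MM x y * c))"
proof -
  have "cons2 x y w (2 * stop_time (cons2 x y w)) = w (2 * stop_time w)"
       "cons2 x y w (2 * stop_time (cons2 x y w) + 1) = w (2 * stop_time w + 1)"
    using stop_cons_ntri[OF assms] by (simp_all only: two_Suc(2) two_Suc(1) cons2_simps)
  then show ?thesis unfolding final_sides_def Let_def
    using stop_cons_ntri[OF assms] by (simp del: seg_len.simps add: seg_len_cons)
qed

lemma perim_ntri: "\<not> tri x y \<Longrightarrow> \<exists>k. rel_tri w k \<Longrightarrow> final_perimeter (cons2 x y w) = MM x y * final_perimeter w"
  unfolding final_perimeter_def using final_sides_ntri[of x y w]
  by (auto split: prod.splits simp: algebra_simps)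

lemma area_ntri: "\<not> tri x y \<Longrightarrow> \<exists>k. rel_tri w k \<Longrightarrow> final_area (cons2 x y w) = (MM x y)^2 * final_area w"
  unfolding final_area_def using final_sides_ntri[of x y w] MM_nonneg[of x y]
  by (auto split: prod.splits simp: tri_area_scale)

lemma meas_coord[measurable]: "(\<lambda>u. u n) \<in> borel_measurable Omega"
  unfolding Omega_def by measurable

lemma meas_rel_tri[measurable]: "Measurable.pred Omega (\<lambda>u. rel_tri u k)"
  unfolding rel_tri_def tri_def[symmetric] by measurable

lemma seg_len_Suc': "seg_len u (Suc k) = seg_len u k * MM (u (2*k)) (u (2*k+1))"
  by (simp add: MM_def)

lemma seg_len_0: "seg_len u 0 = 1" by simp

lemma meas_seg_len[measurable]: "(\<lambda>u. seg_len u k) \<in> borel_measurable Omega"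
  by (induction k) (simp_all del: seg_len.simps add: seg_len_Suc' seg_len_0, measurable)

lemma seg_len_nonneg: "0 \<le> seg_len u k"
  by (induction k) (simp_all del: seg_len.simps add: seg_len_Suc' seg_len_0 MM_nonneg)

lemma meas_stop[measurable]: "stop_time \<in> measurable Omega (count_space UNIV)"
  unfolding stop_time_def by measurable

lemma perim_eq: "final_perimeter u = seg_len u (stop_time u)"
  unfolding final_perimeter_def final_sides_def Let_def
  using pieces_sum[of "u (2 * stop_time u)" "u (2 * stop_time u+1)"] by (simp del: seg_len.simps add: distrib_left[symmetric])

lemma area_eq: "final_area u = (seg_len u (stop_time u))^2 * AA (u (2 * stop_time u)) (u (2 * stop_time u+1))"
  unfolding final_area_def final_sides_def Let_def AA_def
  by (simp add: tri_area_scale seg_len_nonneg)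

lemma meas_perim[measurable]: "final_perimeter \<in> borel_measurable Omega"
  unfolding perim_eq
  by (rule measurable_compose_countable[OF _ meas_stop, where f="\<lambda>k u. seg_len u k"]) measurable

lemma meas_area[measurable]: "final_area \<in> borel_measurable Omega"
  unfolding area_eq
  by (rule measurable_compose_countable[OF _ meas_stop, where f="\<lambda>k u. (seg_len u k)^2 * AA (u (2*k)) (u (2*k+1))"]) measurable

lemma space_Omega[simp]: "space Omega = UNIV"
  by (simp add: Omega_def space_PiM)

lemma case_nat_meas[measurable]: "(\<lambda>w. case_nat x w) \<in> measurable US.S US.S"
  by (rule measurable_PiM_single') (auto simp: space_PiM split: nat.split)

lemma rec:
  assumes [measurable]: "f \<in> borel_measurable Omega"
  shows "(\<integral>\<^sup>+u. f u \<partial>Omega) = (\<integral>\<^sup>+x. \<integral>\<^sup>+y. \<integral>\<^sup>+w. f (cons2 x y w) \<partial>Omega \<partial>U \<partial>U)"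
proof -
  have m[measurable]: "f \<in> borel_measurable US.S" using assms Omega_eq by simp
  have "(\<integral>\<^sup>+u. f u \<partial>Omega) = (\<integral>\<^sup>+x. (\<integral>\<^sup>+w. f (case_nat x w) \<partial>US.S) \<partial>U)"
    unfolding Omega_eq by (rule step1[OF m])
  also have "\<dots> = (\<integral>\<^sup>+x. \<integral>\<^sup>+y. \<integral>\<^sup>+w. f (case_nat x (case_nat y w)) \<partial>US.S \<partial>U \<partial>U)"
    by (rule nn_integral_cong, rule step1) measurable
  finally show ?thesis unfolding cons2_def Omega_eq .
qed

interpretation PO: prob_space Omega unfolding Omega_eq by (rule US.P.prob_space_axioms)

definition I2 :: "(real \<Rightarrow> real \<Rightarrow> real) \<Rightarrow> ennreal" where
  "I2 g = (\<integral>\<^sup>+x. \<integral>\<^sup>+y. ennreal (g x y) \<partial>U \<partial>U)"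

lemma I2_lin:
  assumes [measurable]: "(\<lambda>z. g (fst z) (snd z)) \<in> borel_measurable (U \<Otimes>\<^sub>M U)"
     "(\<lambda>z. h (fst z) (snd z)) \<in> borel_measurable (U \<Otimes>\<^sub>M U)"
  shows "(\<integral>\<^sup>+x. \<integral>\<^sup>+y. ennreal (g x y) + ennreal (h x y) * c \<partial>U \<partial>U) = I2 g + I2 h * c"
proof -
  have [measurable]: "\<And>x. (\<lambda>y. g x y) \<in> borel_measurable U" "\<And>x. (\<lambda>y. h x y) \<in> borel_measurable U"
    using measurable_Pair2[OF assms(1)] measurable_Pair2[OF assms(2)] by auto
  have "(\<integral>\<^sup>+x. \<integral>\<^sup>+y. ennreal (g x y) + ennreal (h x y) * c \<partial>U \<partial>U)
     = (\<integral>\<^sup>+x. (\<integral>\<^sup>+y. ennreal (g x y) \<partial>U) + (\<integral>\<^sup>+y. ennreal (h x y) \<partial>U) * c \<partial>U)"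
    by (rule nn_integral_cong) (simp add: nn_integral_add nn_integral_multc)
  also have "\<dots> = I2 g + I2 h * c"
    unfolding I2_def by (simp add: nn_integral_add nn_integral_multc)
  finally show ?thesis .
qed

lemma I2_multc:
  assumes [measurable]: "(\<lambda>z. h (fst z) (snd z)) \<in> borel_measurable (U \<Otimes>\<^sub>M U)"
  shows "(\<integral>\<^sup>+x. \<integral>\<^sup>+y. ennreal (h x y) * c \<partial>U \<partial>U) = I2 h * c"
  using I2_lin[of "\<lambda>_ _. 0" h c] assms by (simp add: I2_def)

definition gT :: "real \<Rightarrow> real \<Rightarrow> real" where "gT x y = (if tri x y then 1 else 0)"
definition gN :: "real \<Rightarrow> real \<Rightarrow> real" where "gN x y = (if tri x y then 0 else 1)"
definition gM1 :: "real \<Rightarrow> real \<Rightarrow> real" where "gM1 x y = (if tri x y then 0 else MM x y)"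
definition gM2 :: "real \<Rightarrow> real \<Rightarrow> real" where "gM2 x y = (if tri x y then 0 else (MM x y)^2)"
definition gA :: "real \<Rightarrow> real \<Rightarrow> real" where "gA x y = (if tri x y then AA x y else 0)"

lemma meas_gs[measurable]:
  "(\<lambda>z. gT (fst z) (snd z)) \<in> borel_measurable (U \<Otimes>\<^sub>M U)"
  "(\<lambda>z. gN (fst z) (snd z)) \<in> borel_measurable (U \<Otimes>\<^sub>M U)"
  "(\<lambda>z. gM1 (fst z) (snd z)) \<in> borel_measurable (U \<Otimes>\<^sub>M U)"
  "(\<lambda>z. gM2 (fst z) (snd z)) \<in> borel_measurable (U \<Otimes>\<^sub>M U)"
  "(\<lambda>z. gA (fst z) (snd z)) \<in> borel_measurable (U \<Otimes>\<^sub>M U)"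
  unfolding gT_def gN_def gM1_def gM2_def gA_def by measurable


lemma AA_nonneg: assumes "tri x y" shows "0 \<le> AA x y"
proof -
  let ?a = "piece1 x y" and ?b = "piece2 x y" and ?c = "piece3 x y"
  have s: "(?a + ?b + ?c) / 2 = 1/2" using pieces_sum[of x y] by simp
  have "?a < ?b + ?c" "?b < ?a + ?c" "?c < ?a + ?b" using assms by (auto simp: tri_def is_triangle_def)
  then have "0 < 1/2 - ?a" "0 < 1/2 - ?b" "0 < 1/2 - ?c" using pieces_sum[of x y] by auto
  then have "0 \<le> 1/2 * (1/2 - ?a) * (1/2 - ?b) * (1/2 - ?c)" by simp
  then show ?thesis unfolding AA_def tri_area_def Let_def s by simp
qed

lemma two_ennreal: "0 \<le> a \<Longrightarrow> 2 * ennreal a = ennreal (2 * a)"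
  by (simp add: ennreal_mult)

lemma U_to_lborel:
  assumes [measurable]: "f \<in> borel_measurable borel"
  shows "(\<integral>\<^sup>+x. f x \<partial>U) = (\<integral>\<^sup>+x. f x * indicator {0..1} x \<partial>lborel)"
  unfolding U_def by (subst nn_integral_uniform_measure) (auto simp: divide_ennreal_def)

lemma AE_pts: "AE y in lborel. \<forall>c\<in>set L. y \<noteq> (c::real)"
  by (rule AE_ball_countable') (auto intro: AE_lborel_singleton countable_finite)

lemma nn_cong_pts:
  assumes "\<And>y. (\<forall>c\<in>set L. y \<noteq> c) \<Longrightarrow> f y = g y"
  shows "integral\<^sup>N lborel f = integral\<^sup>N lborel (g :: real \<Rightarrow> ennreal)"
  by (rule nn_integral_cong_AE) (use AE_pts[of L] in \<open>eventually_elim, use assms in auto\<close>)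

lemma ftc:
  fixes F f :: "real \<Rightarrow> real"
  assumes "a \<le> b" "continuous_on {a..b} F"
    "\<And>y. a < y \<Longrightarrow> y < b \<Longrightarrow> (F has_real_derivative f y) (at y)"
    "\<And>y. a \<le> y \<Longrightarrow> y \<le> b \<Longrightarrow> 0 \<le> f y"
  shows "(\<integral>\<^sup>+y. ennreal (f y) * indicator {a..b} y \<partial>lborel) = ennreal (F b - F a)"
proof (rule nn_integral_has_integral_lebesgue')
  show "(f has_integral F b - F a) {a..b}"
    using assms(1,2) by (rule fundamental_theorem_of_calculus_interior)
      (use assms(3) in \<open>auto simp: has_real_derivative_iff_has_vector_derivative[symmetric]\<close>)
qed (use assms(4) in auto)

interpretation PP: pair_prob_space U U by unfold_locales

lemma I2_sym:
  assumes [measurable]: "(\<lambda>z. g (fst z) (snd z)) \<in> borel_measurable (U \<Otimes>\<^sub>M U)"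
    and nn: "\<And>x y. 0 \<le> g x y" and sym: "\<And>x y. g x y = g y x"
  shows "I2 g = 2 * (\<integral>\<^sup>+x. \<integral>\<^sup>+y. ennreal (if x < y then g x y else 0) \<partial>U \<partial>U)"
proof -
  let ?J1 = "\<integral>\<^sup>+x. \<integral>\<^sup>+y. ennreal (if x < y then g x y else 0) \<partial>U \<partial>U"
  let ?J2 = "\<integral>\<^sup>+x. \<integral>\<^sup>+y. ennreal (if y < x then g x y else 0) \<partial>U \<partial>U"
  let ?J3 = "\<integral>\<^sup>+x. \<integral>\<^sup>+y. ennreal (if x = y then g x y else 0) \<partial>U \<partial>U"
  have [measurable]: "\<And>x. (\<lambda>y. g x y) \<in> borel_measurable U"
    using measurable_Pair2[OF assms(1)] by auto
  have m1[measurable]: "(\<lambda>z. (if fst z < snd z then g (fst z) (snd z) else 0)) \<in> borel_measurable (U \<Otimes>\<^sub>M U)"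
    by measurable
  have m2[measurable]: "(\<lambda>z. (if snd z < fst z then g (fst z) (snd z) else 0)) \<in> borel_measurable (U \<Otimes>\<^sub>M U)"
    by measurable
  have m3[measurable]: "(\<lambda>z. (if fst z = snd z then g (fst z) (snd z) else 0)) \<in> borel_measurable (U \<Otimes>\<^sub>M U)"
    by measurable
  have "I2 g = (\<integral>\<^sup>+x. \<integral>\<^sup>+y. ennreal (if x < y then g x y else 0) + ennreal (if y < x then g x y else 0) * 1 \<partial>U \<partial>U)
      + (\<integral>\<^sup>+x. \<integral>\<^sup>+y. ennreal (if x = y then g x y else 0) \<partial>U \<partial>U)"
  proof -
    have "I2 g = (\<integral>\<^sup>+x. \<integral>\<^sup>+y. ennreal (if x < y then g x y else 0) + ennreal (if y < x then g x y else 0) * 1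
           + ennreal (if x = y then g x y else 0) \<partial>U \<partial>U)"
      unfolding I2_def by (intro nn_integral_cong) (auto simp: nn)
    also have "\<dots> = (\<integral>\<^sup>+x. (\<integral>\<^sup>+y. ennreal (if x < y then g x y else 0) + ennreal (if y < x then g x y else 0) * 1 \<partial>U)
           + (\<integral>\<^sup>+y. ennreal (if x = y then g x y else 0) \<partial>U) \<partial>U)"
      by (intro nn_integral_cong nn_integral_add) measurable
    also have "\<dots> = (\<integral>\<^sup>+x. \<integral>\<^sup>+y. ennreal (if x < y then g x y else 0) + ennreal (if y < x then g x y else 0) * 1 \<partial>U \<partial>U)
      + (\<integral>\<^sup>+x. \<integral>\<^sup>+y. ennreal (if x = y then g x y else 0) \<partial>U \<partial>U)" by (rule nn_integral_add) measurable
    finally show ?thesis .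
  qed
  also have "(\<integral>\<^sup>+x. \<integral>\<^sup>+y. ennreal (if x < y then g x y else 0) + ennreal (if y < x then g x y else 0) * 1 \<partial>U \<partial>U)
      = ?J1 + ?J2"
    using I2_lin[OF m1 m2, of 1] by (simp add: I2_def)
  also have "?J3 = 0"
  proof -
    have "(\<integral>\<^sup>+y. ennreal (if x = y then g x y else 0) \<partial>U) = 0" for x
    proof -
      have "AE y in U. y \<noteq> x" unfolding U_def
      proof (rule AE_uniform_measureI)
        show "AE y in lborel. y \<in> {0..1} \<longrightarrow> y \<noteq> x" using AE_lborel_singleton[of x] by eventually_elim auto
      qed simp
      then have "AE y in U. ennreal (if x = y then g x y else 0) = 0" by eventually_elim auto
      then show ?thesis by (simp add: nn_integral_cong_AE)
    qed
    then show ?thesis by simp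
  qed
  also have "?J2 = (\<integral>\<^sup>+y. \<integral>\<^sup>+x. ennreal (if y < x then g x y else 0) \<partial>U \<partial>U)"
    by (rule PP.Fubini'[symmetric]) measurable
  also have "\<dots> = ?J1" by (intro nn_integral_cong) (metis sym)
  finally show ?thesis by (simp add: mult_2)
qed

lemma tri_le: "x \<le> y \<Longrightarrow> tri x y \<longleftrightarrow> x < 1/2 \<and> 1/2 < y \<and> y < x + 1/2"
  by (auto simp: tri_def is_triangle_def piece1_def piece2_def piece3_def min_def max_def)

lemma MM_le: "x \<le> y \<Longrightarrow> MM x y = max x (max (y - x) (1 - y))"
  by (auto simp: MM_def piece1_def piece2_def piece3_def min_def max_def)

lemma AA_le: "x \<le> y \<Longrightarrow> AA x y = sqrt ((1/2 - x) / 2) * sqrt ((y - 1/2) * (x + 1/2 - y))"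
proof -
  assume "x \<le> y"
  then have "AA x y = sqrt (1/2 * (1/2 - x) * (1/2 - (y - x)) * (1/2 - (1 - y)))"
    by (auto simp: AA_def tri_area_def Let_def piece1_def piece2_def piece3_def min_def max_def)
  also have "1/2 * (1/2 - x) * (1/2 - (y - x)) * (1/2 - (1 - y)) = ((1/2 - x) / 2) * ((y - 1/2) * (x + 1/2 - y))"
    by (simp add: field_simps)
  finally show ?thesis by (simp only: real_sqrt_mult)
qed

lemma sym_tri: "tri x y = tri y x"
  by (auto simp: tri_def is_triangle_def piece1_def piece2_def piece3_def min_def max_def)
lemma sym_MM: "MM x y = MM y x"
  by (auto simp: MM_def piece1_def piece2_def piece3_def min_def max_def)
lemma sym_AA: "AA x y = AA y x"
  unfolding AA_def piece1_def piece2_def piece3_def by (simp add: min.commute max.commute abs_minus_commute)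

lemma outer_U:
  assumes "\<And>x. x \<in> {0..1} \<Longrightarrow> F x = ennreal (G x)" and [measurable]: "G \<in> borel_measurable borel"
  shows "(\<integral>\<^sup>+x. F x \<partial>U) = (\<integral>\<^sup>+x. ennreal (G x) * indicator {0..1} x \<partial>lborel)"
proof -
  have "AE x in U. F x = ennreal (G x)" unfolding U_def
    by (rule AE_uniform_measureI) (auto simp: assms(1))
  then have "(\<integral>\<^sup>+x. F x \<partial>U) = (\<integral>\<^sup>+x. ennreal (G x) \<partial>U)" by (rule nn_integral_cong_AE)
  also have "\<dots> = (\<integral>\<^sup>+x. ennreal (G x) * indicator {0..1} x \<partial>lborel)" by (rule U_to_lborel) measurable
  finally show ?thesis .
qed

lemma inner_gT: assumes "x \<in> {0..1}"
  shows "(\<integral>\<^sup>+y. ennreal (if x < y then gT x y else 0) \<partial>U) = ennreal (if x < 1/2 then x else 0)"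
proof -
  have "(\<integral>\<^sup>+y. ennreal (if x < y then gT x y else 0) \<partial>U) = (\<integral>\<^sup>+y. ennreal (if x < y then gT x y else 0) * indicator {0..1} y \<partial>lborel)"
    by (rule U_to_lborel) (unfold gT_def, measurable)
  also have "\<dots> = ennreal (if x < 1/2 then x else 0)"
  proof (cases "x < 1/2")
    case True
    have "(\<integral>\<^sup>+y. ennreal (if x < y then gT x y else 0) * indicator {0..1} y \<partial>lborel)
        = (\<integral>\<^sup>+y. ennreal 1 * indicator {1/2..x+1/2} y \<partial>lborel)"
      by (rule nn_cong_pts[where L="[1/2, x+1/2]"]) (use assms True in \<open>auto simp: gT_def tri_le indicator_def\<close>)
    also have "\<dots> = ennreal ((x + 1/2) - 1/2)"
      by (rule ftc[where F="\<lambda>y. y"]) (use True assms in \<open>auto intro!: derivative_eq_intros continuous_intros\<close>)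
    finally show ?thesis using True by simp
  next
    case False
    have "(\<integral>\<^sup>+y. ennreal (if x < y then gT x y else 0) * indicator {0..1} y \<partial>lborel) = (\<integral>\<^sup>+(y::real). (0::ennreal) \<partial>lborel)"
      by (rule nn_cong_pts[where L="[]"]) (use False in \<open>auto simp: gT_def tri_le indicator_def\<close>)
    then show ?thesis using False by simp
  qed
  finally show ?thesis .
qed

lemma I2_gT: "I2 gT = ennreal (1/4)"
proof -
  have "I2 gT = 2 * (\<integral>\<^sup>+x. \<integral>\<^sup>+y. ennreal (if x < y then gT x y else 0) \<partial>U \<partial>U)"
    by (rule I2_sym) (auto simp: gT_def sym_tri)
  also have "(\<integral>\<^sup>+x. \<integral>\<^sup>+y. ennreal (if x < y then gT x y else 0) \<partial>U \<partial>U)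
     = (\<integral>\<^sup>+x. ennreal (if x < 1/2 then x else 0) * indicator {0..1} x \<partial>lborel)"
    by (rule outer_U) (auto simp: inner_gT)
  also have "\<dots> = (\<integral>\<^sup>+x. ennreal x * indicator {0..1/2} x \<partial>lborel)"
    by (rule nn_cong_pts[where L="[1/2]"]) (auto simp: indicator_def)
  also have "\<dots> = ennreal ((1/2)^2/2 - 0^2/2)"
    by (rule ftc[where F="\<lambda>y. y^2/2"]) (auto intro!: derivative_eq_intros continuous_intros)
  finally show ?thesis by (simp add: two_ennreal power2_eq_square)
qed

definition hM :: "nat \<Rightarrow> real \<Rightarrow> real \<Rightarrow> real" where
  "hM n x y = (if tri x y then 0 else MM x y ^ n)"

lemma meas_hM[measurable]: "(\<lambda>z. hM n (fst z) (snd z)) \<in> borel_measurable (U \<Otimes>\<^sub>M U)"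
  unfolding hM_def by measurable

lemma ennreal_sum_eq: "0 \<le> a \<Longrightarrow> 0 \<le> b \<Longrightarrow> a + b = c \<Longrightarrow> ennreal a + ennreal b = ennreal c"
  by (metis ennreal_plus)

lemma ennreal_sum_eq2: "0 \<le> a \<Longrightarrow> 0 \<le> b \<Longrightarrow> 2 * (a + b) = c \<Longrightarrow> 2 * (ennreal a + ennreal b) = ennreal c"
  by (metis ennreal_plus two_ennreal add_nonneg_nonneg)

lemma inner_hM: assumes x: "x \<in> {0..1}"
  shows "(\<integral>\<^sup>+y. ennreal (if x < y then hM n x y else 0) \<partial>U)
    = ennreal (if x < 1/2 then 2 * ((1-x)^(Suc n) - (1/2)^(Suc n)) / real (Suc n) else x^n * (1 - x))"
proof -
  have "(\<integral>\<^sup>+y. ennreal (if x < y then hM n x y else 0) \<partial>U) = (\<integral>\<^sup>+y. ennreal (if x < y then hM n x y else 0) * indicator {0..1} y \<partial>lborel)"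
    by (rule U_to_lborel) (unfold hM_def, measurable)
  also have "\<dots> = ennreal (if x < 1/2 then 2 * ((1-x)^(Suc n) - (1/2)^(Suc n)) / real (Suc n) else x^n * (1 - x))"
  proof (cases "x < 1/2")
    case True
    have "(\<integral>\<^sup>+y. ennreal (if x < y then hM n x y else 0) * indicator {0..1} y \<partial>lborel)
        = (\<integral>\<^sup>+y. ennreal ((1-y)^n) * indicator {x..1/2} y + ennreal ((y-x)^n) * indicator {x+1/2..1} y \<partial>lborel)"
    proof (rule nn_cong_pts[where L="[x, 1/2, x+1/2, 1]"])
      fix y :: real assume y: "\<forall>c\<in>set [x, 1/2, x+1/2, 1]. y \<noteq> c"
      consider "y < x" | "x < y" "y < 1/2" | "1/2 < y" "y < x + 1/2" | "x + 1/2 < y" "y < 1" | "1 < y"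
        using y by force
      then show "ennreal (if x < y then hM n x y else 0) * indicator {0..1} y
          = ennreal ((1-y)^n) * indicator {x..1/2} y + ennreal ((y-x)^n) * indicator {x+1/2..1} y"
      proof cases
        case 1 then show ?thesis using x True by (auto simp: indicator_def)
      next
        case 2 then show ?thesis using x True by (auto simp: indicator_def hM_def tri_le MM_le max_def)
      next
        case 3 then show ?thesis using x True by (auto simp: indicator_def hM_def tri_le)
      next
        case 4 then show ?thesis using x True by (auto simp: indicator_def hM_def tri_le MM_le max_def)
      next
        case 5 then show ?thesis using x True by (auto simp: indicator_def)
      qed
    qed
    also have "\<dots> = (\<integral>\<^sup>+y. ennreal ((1-y)^n) * indicator {x..1/2} y \<partial>lborel) + (\<integral>\<^sup>+y. ennreal ((y-x)^n) * indicator {x+1/2..1} y \<partial>lborel)"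
      by (rule nn_integral_add) (simp_all only: measurable_lborel2, measurable)
    also have "(\<integral>\<^sup>+y. ennreal ((1-y)^n) * indicator {x..1/2} y \<partial>lborel)
       = ennreal ((\<lambda>y. - ((1-y)^(Suc n)) / real (Suc n)) (1/2) - (\<lambda>y. - ((1-y)^(Suc n)) / real (Suc n)) x)"
      by (rule ftc) (use True x in \<open>auto intro!: derivative_eq_intros continuous_intros simp del: power_Suc\<close>)
    also have "(\<integral>\<^sup>+y. ennreal ((y-x)^n) * indicator {x+1/2..1} y \<partial>lborel)
       = ennreal ((\<lambda>y. (y-x)^(Suc n) / real (Suc n)) 1 - (\<lambda>y. (y-x)^(Suc n) / real (Suc n)) (x+1/2))"
      by (rule ftc) (use True x in \<open>auto intro!: derivative_eq_intros continuous_intros simp del: power_Suc\<close>)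
    also have "ennreal ((\<lambda>y. - ((1-y)^(Suc n)) / real (Suc n)) (1/2) - (\<lambda>y. - ((1-y)^(Suc n)) / real (Suc n)) x)
       + ennreal ((\<lambda>y. (y-x)^(Suc n) / real (Suc n)) 1 - (\<lambda>y. (y-x)^(Suc n) / real (Suc n)) (x+1/2))
       = ennreal (2 * ((1-x)^(Suc n) - (1/2)^(Suc n)) / real (Suc n))"
    proof (rule ennreal_sum_eq)
      have P: "(1/2::real)^(Suc n) \<le> (1-x)^(Suc n)" using True by (intro power_mono) auto
      have h1: "1 - 1/2 = (1/2::real)" by simp
      have A: "(\<lambda>y. - ((1-y)^(Suc n)) / real (Suc n)) (1/2) - (\<lambda>y. - ((1-y)^(Suc n)) / real (Suc n)) x
          = ((1-x)^(Suc n) - (1/2)^(Suc n)) / real (Suc n)"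
        unfolding h1 by (simp add: diff_divide_distrib del: power_Suc)
      have B: "(\<lambda>y. (y-x)^(Suc n) / real (Suc n)) 1 - (\<lambda>y. (y-x)^(Suc n) / real (Suc n)) (x+1/2)
          = ((1-x)^(Suc n) - (1/2)^(Suc n)) / real (Suc n)"
        by (simp add: diff_divide_distrib del: power_Suc)
      show "0 \<le> (\<lambda>y. - ((1-y)^(Suc n)) / real (Suc n)) (1/2) - (\<lambda>y. - ((1-y)^(Suc n)) / real (Suc n)) x"
        unfolding A using P by (simp del: power_Suc)
      show "0 \<le> (\<lambda>y. (y-x)^(Suc n) / real (Suc n)) 1 - (\<lambda>y. (y-x)^(Suc n) / real (Suc n)) (x+1/2)"
        unfolding B using P by (simp del: power_Suc)
      show "(\<lambda>y. - ((1-y)^(Suc n)) / real (Suc n)) (1/2) - (\<lambda>y. - ((1-y)^(Suc n)) / real (Suc n)) x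
        + ((\<lambda>y. (y-x)^(Suc n) / real (Suc n)) 1 - (\<lambda>y. (y-x)^(Suc n) / real (Suc n)) (x+1/2))
        = 2 * ((1-x)^(Suc n) - (1/2)^(Suc n)) / real (Suc n)"
        unfolding A B by (simp del: power_Suc)
    qed
    finally show ?thesis using True by simp
  next
    case False
    have "(\<integral>\<^sup>+y. ennreal (if x < y then hM n x y else 0) * indicator {0..1} y \<partial>lborel)
        = (\<integral>\<^sup>+y. ennreal (x^n) * indicator {x..1} y \<partial>lborel)"
    proof (rule nn_cong_pts[where L="[x, 1]"])
      fix y :: real assume y: "\<forall>c\<in>set [x, 1]. y \<noteq> c"
      show "ennreal (if x < y then hM n x y else 0) * indicator {0..1} y = ennreal (x^n) * indicator {x..1} y"
        using x False y by (auto simp: indicator_def hM_def tri_le MM_le max_def)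
    qed
    also have "\<dots> = ennreal ((\<lambda>y. x^n * y) 1 - (\<lambda>y. x^n * y) x)"
      by (rule ftc) (use False x in \<open>auto intro!: derivative_eq_intros continuous_intros\<close>)
    finally show ?thesis using False by (simp add: algebra_simps)
  qed
  finally show ?thesis .
qed

lemma I2_hM_red: "I2 (hM n) = 2 * ((\<integral>\<^sup>+x. ennreal (2 * ((1-x)^(Suc n) - (1/2)^(Suc n)) / real (Suc n)) * indicator {0..1/2} x \<partial>lborel)
       + (\<integral>\<^sup>+x. ennreal (x^n * (1 - x)) * indicator {1/2..1} x \<partial>lborel))"
proof -
  have "I2 (hM n) = 2 * (\<integral>\<^sup>+x. \<integral>\<^sup>+y. ennreal (if x < y then hM n x y else 0) \<partial>U \<partial>U)"
    by (rule I2_sym) (auto simp: hM_def sym_tri sym_MM MM_nonneg)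
  also have "(\<integral>\<^sup>+x. \<integral>\<^sup>+y. ennreal (if x < y then hM n x y else 0) \<partial>U \<partial>U)
     = (\<integral>\<^sup>+x. ennreal (if x < 1/2 then 2 * ((1-x)^(Suc n) - (1/2)^(Suc n)) / real (Suc n) else x^n * (1 - x)) * indicator {0..1} x \<partial>lborel)"
    by (rule outer_U) (auto simp: inner_hM simp del: power_Suc)
  also have "\<dots> = (\<integral>\<^sup>+x. ennreal (2 * ((1-x)^(Suc n) - (1/2)^(Suc n)) / real (Suc n)) * indicator {0..1/2} x
       + ennreal (x^n * (1 - x)) * indicator {1/2..1} x \<partial>lborel)"
    by (rule nn_cong_pts[where L="[0, 1/2, 1]"]) (auto simp: indicator_def simp del: power_Suc)
  also have "\<dots> = (\<integral>\<^sup>+x. ennreal (2 * ((1-x)^(Suc n) - (1/2)^(Suc n)) / real (Suc n)) * indicator {0..1/2} x \<partial>lborel)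
       + (\<integral>\<^sup>+x. ennreal (x^n * (1 - x)) * indicator {1/2..1} x \<partial>lborel)"
    by (rule nn_integral_add) (simp_all only: measurable_lborel2, measurable)
  finally show ?thesis .
qed

lemma pow_half_le: "0 \<le> y \<Longrightarrow> y \<le> 1/2 \<Longrightarrow> (1/2::real)^k \<le> (1-y)^k"
  by (intro power_mono) auto

lemma I2_gM1: "I2 gM1 = ennreal (1/2)"
proof -
  have e: "gM1 = hM 1" by (auto simp: fun_eq_iff gM1_def hM_def)
  have a: "(\<integral>\<^sup>+x. ennreal (2 * ((1-x)^(Suc 1) - (1/2)^(Suc 1)) / real (Suc 1)) * indicator {0..1/2} x \<partial>lborel)
     = ennreal ((\<lambda>x. 3*x/4 - x^2 + x^3/3) (1/2) - (\<lambda>x. 3*x/4 - x^2 + x^3/3) 0)"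
  proof (rule ftc)
    fix y :: real assume "0 \<le> y" "y \<le> 1/2"
    then show "0 \<le> 2 * ((1-y)^(Suc 1) - (1/2)^(Suc 1)) / real (Suc 1)" using pow_half_le[of y "Suc 1"] by (simp del: power_Suc)
  qed (auto intro!: derivative_eq_intros continuous_intros simp: field_simps power2_eq_square)
  have b: "(\<integral>\<^sup>+x. ennreal (x^1 * (1 - x)) * indicator {1/2..1} x \<partial>lborel)
     = ennreal ((\<lambda>x. x^2/2 - x^3/3) 1 - (\<lambda>x. x^2/2 - x^3/3) (1/2))"
    by (rule ftc) (auto intro!: derivative_eq_intros continuous_intros simp: field_simps power2_eq_square)
  show ?thesis unfolding e I2_hM_red a b
    by (rule ennreal_sum_eq2) (simp_all add: eval_nat_numeral)
qed

lemma I2_gM2: "I2 gM2 = ennreal (11/32)"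
proof -
  have e: "gM2 = hM 2" by (auto simp: fun_eq_iff gM2_def hM_def)
  have a: "(\<integral>\<^sup>+x. ennreal (2 * ((1-x)^(Suc 2) - (1/2)^(Suc 2)) / real (Suc 2)) * indicator {0..1/2} x \<partial>lborel)
     = ennreal ((\<lambda>x. 2/3 * (- ((1-x)^4) / 4 - x/8)) (1/2) - (\<lambda>x. 2/3 * (- ((1-x)^4) / 4 - x/8)) 0)"
  proof (rule ftc)
    fix y :: real assume "0 \<le> y" "y \<le> 1/2"
    then show "0 \<le> 2 * ((1-y)^(Suc 2) - (1/2)^(Suc 2)) / real (Suc 2)" using pow_half_le[of y "Suc 2"] by (simp del: power_Suc)
  qed (auto intro!: derivative_eq_intros continuous_intros simp: field_simps power2_eq_square power3_eq_cube)
  have b: "(\<integral>\<^sup>+x. ennreal (x^2 * (1 - x)) * indicator {1/2..1} x \<partial>lborel)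
     = ennreal ((\<lambda>x. x^3/3 - x^4/4) 1 - (\<lambda>x. x^3/3 - x^4/4) (1/2))"
    by (rule ftc) (auto intro!: derivative_eq_intros continuous_intros simp: field_simps eval_nat_numeral)
  show ?thesis unfolding e I2_hM_red a b
    by (rule ennreal_sum_eq2) (simp_all add: eval_nat_numeral)
qed

lemma Beta_half: "Beta (1/2) (3/2) = pi / 2"
proof -
  have nz: "(1/2::real) \<notin> \<int>\<^sub>\<le>\<^sub>0" by (auto elim!: nonpos_Ints_cases)
  have g32: "Gamma (3/2::real) = 1/2 * sqrt pi"
    using Gamma_plus1[OF nz] by (simp add: Gamma_one_half_real)
  have g2: "Gamma (2::real) = 1"
    using Gamma_plus1[of "1::real"] by (simp add: one_add_one)
  have g2': "Gamma (1/2 + 3/2 :: real) = 1" using g2 by simp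
  have sp: "sqrt pi * sqrt pi = pi" by simp
  show ?thesis unfolding Beta_def g32 g2' Gamma_one_half_real
    by (simp add: sp mult.assoc[symmetric])
qed

lemma unit_half_disk: "(\<integral>\<^sup>+x. ennreal (sqrt (1 - x\<^sup>2)) * indicator {-1..1} x \<partial>lborel) = ennreal (pi/2)"
proof -
  have "(\<integral>\<^sup>+x. indicator {-1..1} x * sqrt (1 - x\<^sup>2) ^ 1 \<partial>lborel) = ennreal (Beta (1 / 2) (real 1 / 2 + 1))"
    by (rule emeasure_cball_aux_integral)
  moreover have "\<And>x. ennreal (sqrt (1 - x\<^sup>2)) * indicator {-1..1} x = indicator {-1..1} x * sqrt (1 - x\<^sup>2) ^ 1"
    by (simp split: split_indicator)
  ultimately show ?thesis by (simp add: Beta_half)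
qed

lemma half_disk:
  fixes a b :: real assumes ab: "a \<le> b"
  shows "(\<integral>\<^sup>+y. ennreal (sqrt ((y - a) * (b - y))) * indicator {a..b} y \<partial>lborel) = ennreal (pi * (b - a)^2 / 8)"
proof (cases "a = b")
  case True
  have "(\<integral>\<^sup>+y. ennreal (sqrt ((y - a) * (b - y))) * indicator {a..b} y \<partial>lborel) = (\<integral>\<^sup>+(y::real). (0::ennreal) \<partial>lborel)"
    by (rule nn_cong_pts[where L="[a]"]) (use True in \<open>auto simp: indicator_def\<close>)
  then show ?thesis using True by simp
next
  case False
  define r where "r = (b - a) / 2"
  define c where "c = (a + b) / 2"
  have r: "r > 0" using ab False by (simp add: r_def)
  have "(\<integral>\<^sup>+y. ennreal (sqrt ((y - a) * (b - y))) * indicator {a..b} y \<partial>lborel)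
      = ennreal \<bar>r\<bar> * (\<integral>\<^sup>+s. ennreal (sqrt ((c + r * s - a) * (b - (c + r * s)))) * indicator {a..b} (c + r * s) \<partial>lborel)"
    by (rule nn_integral_real_affine) (use r in auto)
  also have "(\<integral>\<^sup>+s. ennreal (sqrt ((c + r * s - a) * (b - (c + r * s)))) * indicator {a..b} (c + r * s) \<partial>lborel)
      = (\<integral>\<^sup>+s. ennreal r * (ennreal (sqrt (1 - s\<^sup>2)) * indicator {-1..1} s) \<partial>lborel)"
  proof (rule nn_integral_cong)
    fix s :: real
    have p: "(c + r * s - a) * (b - (c + r * s)) = r^2 * (1 - s^2)"
      by (simp add: r_def c_def field_simps power2_eq_square)
    have i: "(c + r * s \<in> {a..b}) = (s \<in> {-1..1})"
    proof -
      have "a = c - r" "b = c + r" by (simp_all add: r_def c_def field_simps)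
      moreover have "r * (-1) \<le> r * s \<longleftrightarrow> -1 \<le> s" "r * s \<le> r * 1 \<longleftrightarrow> s \<le> 1"
        using r by (simp_all only: mult_le_cancel_left_pos)
      ultimately show ?thesis by auto
    qed
    show "ennreal (sqrt ((c + r * s - a) * (b - (c + r * s)))) * indicator {a..b} (c + r * s)
        = ennreal r * (ennreal (sqrt (1 - s\<^sup>2)) * indicator {-1..1} s)"
      unfolding p using r i by (simp add: real_sqrt_mult indicator_def ennreal_mult')
  qed
  also have "\<dots> = ennreal r * ennreal (pi/2)"
    by (simp add: nn_integral_cmult unit_half_disk)
  also have "ennreal \<bar>r\<bar> * (ennreal r * ennreal (pi/2)) = ennreal (r * (r * (pi/2)))"
    using r by (simp only: abs_of_pos ennreal_mult'[OF less_imp_le[OF r]])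
  also have "r * (r * (pi/2)) = pi * (b - a)^2 / 8" by (simp add: r_def power2_eq_square field_simps)
  finally show ?thesis .
qed

definition Kf :: "real \<Rightarrow> real" where "Kf t = sqrt (t/2) * (t * (1/6 - 2*t/5 + 2*t^2/7))"

lemma Kderiv:
  fixes t :: real assumes t: "0 < t"
  shows "(Kf has_real_derivative sqrt (t/2) * (1/2 - t)^2) (at t)"
proof -
  have s2: "sqrt (t/2) * sqrt (t/2) = t/2" using t by simp
  have sp: "sqrt (t/2) > 0" using t by simp
  have inv: "inverse (sqrt (t/2)) = 2 * sqrt (t/2) / t"
    using s2 sp t by (simp add: field_simps)
  have ds: "((\<lambda>t. sqrt (t/2)) has_real_derivative inverse (sqrt (t/2)) / 2 * (1/2)) (at t)"
    by (rule DERIV_chain2[OF DERIV_real_sqrt]) (use t in \<open>auto intro!: derivative_eq_intros\<close>)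
  have dq: "((\<lambda>t. t * (1/6 - 2*t/5 + 2*t^2/7)) has_real_derivative (1/6 - 4*t/5 + 6*t^2/7)) (at t)"
    by (auto intro!: derivative_eq_intros simp: field_simps power2_eq_square)
  have e: "inverse (sqrt (t/2)) / 2 * (1/2) * (t * (1/6 - 2*t/5 + 2*t^2/7)) + (1/6 - 4*t/5 + 6*t^2/7) * sqrt (t/2)
     = sqrt (t/2) * (1/2 - t)^2"
    unfolding inv using t by (simp add: field_simps power2_eq_square)
  have "((\<lambda>t. sqrt (t/2) * (t * (1/6 - 2*t/5 + 2*t^2/7))) has_real_derivative sqrt (t/2) * (1/2 - t)^2) (at t)"
    using DERIV_mult[OF ds dq] unfolding e .
  then show ?thesis unfolding Kf_def[abs_def] .
qed

lemma inner_gA: assumes x: "x \<in> {0..1}"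
  shows "(\<integral>\<^sup>+y. ennreal (if x < y then gA x y else 0) \<partial>U) = ennreal (if x < 1/2 then sqrt ((1/2 - x)/2) * (pi * x^2 / 8) else 0)"
proof -
  have "(\<integral>\<^sup>+y. ennreal (if x < y then gA x y else 0) \<partial>U) = (\<integral>\<^sup>+y. ennreal (if x < y then gA x y else 0) * indicator {0..1} y \<partial>lborel)"
    by (rule U_to_lborel) (unfold gA_def, measurable)
  also have "\<dots> = ennreal (if x < 1/2 then sqrt ((1/2 - x)/2) * (pi * x^2 / 8) else 0)"
  proof (cases "x < 1/2")
    case True
    have "(\<integral>\<^sup>+y. ennreal (if x < y then gA x y else 0) * indicator {0..1} y \<partial>lborel)
        = (\<integral>\<^sup>+y. ennreal (sqrt ((1/2 - x)/2)) * (ennreal (sqrt ((y - 1/2) * (x + 1/2 - y))) * indicator {1/2..x+1/2} y) \<partial>lborel)"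
    proof (rule nn_cong_pts[where L="[1/2, x+1/2]"])
      fix y :: real assume y: "\<forall>c\<in>set [1/2, x+1/2]. y \<noteq> c"
      show "ennreal (if x < y then gA x y else 0) * indicator {0..1} y
          = ennreal (sqrt ((1/2 - x)/2)) * (ennreal (sqrt ((y - 1/2) * (x + 1/2 - y))) * indicator {1/2..x+1/2} y)"
      proof (cases "1/2 < y \<and> y < x + 1/2")
        case True2: True
        then have "x < y" "y \<in> {0..1}" "tri x y" using True x by (auto simp: tri_le)
        then show ?thesis using True2 True by (simp add: gA_def AA_le indicator_def ennreal_mult')
      next
        case False2: False
        then have "y < 1/2 \<or> x + 1/2 < y" using y by auto
        then have "\<not> (x < y \<and> tri x y)" by (auto simp: tri_le)
        then show ?thesis using False2 y by (auto simp: gA_def indicator_def)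
      qed
    qed
    also have "\<dots> = ennreal (sqrt ((1/2 - x)/2)) * (\<integral>\<^sup>+y. ennreal (sqrt ((y - 1/2) * (x + 1/2 - y))) * indicator {1/2..x+1/2} y \<partial>lborel)"
      by (rule nn_integral_cmult) (simp only: measurable_lborel2, measurable)
    also have "(\<integral>\<^sup>+y. ennreal (sqrt ((y - 1/2) * (x + 1/2 - y))) * indicator {1/2..x+1/2} y \<partial>lborel) = ennreal (pi * x^2 / 8)"
      using half_disk[of "1/2" "x+1/2"] x by simp
    also have "ennreal (sqrt ((1/2 - x)/2)) * ennreal (pi * x^2 / 8) = ennreal (sqrt ((1/2 - x)/2) * (pi * x^2 / 8))"
      by (rule ennreal_mult[symmetric]) (use True in auto)
    finally show ?thesis using True by simp
  next
    case False
    have "(\<integral>\<^sup>+y. ennreal (if x < y then gA x y else 0) * indicator {0..1} y \<partial>lborel) = (\<integral>\<^sup>+(y::real). (0::ennreal) \<partial>lborel)"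
      by (rule nn_cong_pts[where L="[]"]) (use False in \<open>auto simp: gA_def tri_le indicator_def\<close>)
    then show ?thesis using False by simp
  qed
  finally show ?thesis .
qed

lemma I2_gA: "I2 gA = ennreal (pi/420)"
proof -
  let ?F = "\<lambda>x. - (pi/8) * Kf (1/2 - x)"
  have "I2 gA = 2 * (\<integral>\<^sup>+x. \<integral>\<^sup>+y. ennreal (if x < y then gA x y else 0) \<partial>U \<partial>U)"
    by (rule I2_sym) (auto simp: gA_def sym_tri sym_AA AA_nonneg)
  also have "(\<integral>\<^sup>+x. \<integral>\<^sup>+y. ennreal (if x < y then gA x y else 0) \<partial>U \<partial>U)
     = (\<integral>\<^sup>+x. ennreal (if x < 1/2 then sqrt ((1/2 - x)/2) * (pi * x^2 / 8) else 0) * indicator {0..1} x \<partial>lborel)"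
    by (rule outer_U) (auto simp: inner_gA)
  also have "\<dots> = (\<integral>\<^sup>+x. ennreal (sqrt ((1/2 - x)/2) * (pi * x^2 / 8)) * indicator {0..1/2} x \<partial>lborel)"
    by (rule nn_cong_pts[where L="[1/2]"]) (auto simp: indicator_def)
  also have "\<dots> = ennreal (?F (1/2) - ?F 0)"
  proof (rule ftc)
    show "continuous_on {0..1/2} ?F" unfolding Kf_def by (intro continuous_intros) auto
    fix y :: real assume y: "0 < y" "y < 1/2"
    have "((\<lambda>x. Kf (1/2 - x)) has_real_derivative sqrt ((1/2 - y)/2) * (1/2 - (1/2 - y))^2 * (-1)) (at y)"
      by (rule DERIV_chain2[OF Kderiv]) (use y in \<open>auto intro!: derivative_eq_intros\<close>)
    then show "(?F has_real_derivative sqrt ((1/2 - y)/2) * (pi * y^2 / 8)) (at y)"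
      by (auto intro!: derivative_eq_intros simp: algebra_simps)
  qed auto
  finally have h1: "I2 gA = 2 * ennreal (?F (1/2) - ?F 0)" .
  have h2: "?F (1/2) - ?F 0 = pi / 840"
  proof -
    have "sqrt ((1/2 - 0)/2) = (1/2::real)" by (rule real_sqrt_unique) (auto simp: power2_eq_square)
    then show ?thesis by (simp add: Kf_def power2_eq_square)
  qed
  have "I2 gA = 2 * ennreal (pi / 840)" using h1 unfolding h2 .
  also have "2 * ennreal (pi / 840) = ennreal (pi / 420)" by (subst two_ennreal) auto
  finally show ?thesis .
qed

lemma I2_gN: "I2 gN = ennreal (3/4)"
proof -
  have "(\<integral>\<^sup>+x. \<integral>\<^sup>+y. ennreal (gT x y) + ennreal (gN x y) * 1 \<partial>U \<partial>U) = I2 gT + I2 gN * 1"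
    by (rule I2_lin) measurable
  moreover have "(\<integral>\<^sup>+x. \<integral>\<^sup>+y. ennreal (gT x y) + ennreal (gN x y) * 1 \<partial>U \<partial>U) = 1"
  proof -
    have "\<And>x y. ennreal (gT x y) + ennreal (gN x y) * 1 = 1" by (simp add: gT_def gN_def)
    then show ?thesis using PU.emeasure_space_1 by simp
  qed
  ultimately have "ennreal (1/4) + I2 gN = 1" using I2_gT by simp
  then have "I2 gN = 1 - ennreal (1/4)"
    by (metis add_diff_cancel_left' ennreal_add_diff_cancel_left ennreal_neq_top)
  also have "\<dots> = ennreal (3/4)" by (simp flip: ennreal_1 add: ennreal_minus)
  finally show ?thesis .
qed

definition NT where "NT = {u \<in> space Omega. \<forall>k. \<not> rel_tri u k}"
lemma NT_sets[measurable]: "NT \<in> sets Omega" unfolding NT_def by measurable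

lemma all_nat_split: "(\<forall>k. P k) \<longleftrightarrow> P 0 \<and> (\<forall>k. P (Suc k))"
  by (metis not0_implies_Suc)

lemma ind_NT_cons: "(indicator NT (cons2 x y w) :: ennreal) = ennreal (gN x y) * indicator NT w"
  unfolding NT_def gN_def by (subst all_nat_split) (auto simp: indicator_def)

lemma term_AE: "AE u in Omega. \<exists>k. rel_tri u k"
proof -
  have "emeasure Omega NT = (\<integral>\<^sup>+u. indicator NT u \<partial>Omega)" by simp
  also have "\<dots> = (\<integral>\<^sup>+x. \<integral>\<^sup>+y. \<integral>\<^sup>+w. ennreal (gN x y) * indicator NT w \<partial>Omega \<partial>U \<partial>U)"
    by (subst rec) (simp_all add: ind_NT_cons)
  also have "\<dots> = (\<integral>\<^sup>+x. \<integral>\<^sup>+y. ennreal (gN x y) * emeasure Omega NT \<partial>U \<partial>U)"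
    by (simp add: nn_integral_cmult)
  also have "\<dots> = I2 gN * emeasure Omega NT"
    by (rule I2_multc) measurable
  finally have eq: "emeasure Omega NT = ennreal (3/4) * emeasure Omega NT" by (simp add: I2_gN)
  obtain m where m: "emeasure Omega NT = ennreal m" "0 \<le> m"
    using PO.emeasure_finite ennreal_cases by (metis ennreal_cases top.not_eq_extremum)
  have "ennreal (3/4) * ennreal m = ennreal (3/4 * m)" using m by (intro ennreal_mult[symmetric]) auto
  then have "ennreal m = ennreal (3/4 * m)" using eq m by simp
  then have "m = 3/4 * m" using m by (simp add: ennreal_inj)
  then have "m = 0" by simp
  then have "emeasure Omega NT = 0" using m by simp
  moreover have "{u \<in> space Omega. \<not> (\<exists>k. rel_tri u k)} = NT" unfolding NT_def by simp
  ultimately show ?thesis by (subst AE_iff_measurable[where N=NT]) auto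
qed

lemma AE_unit: "AE u in Omega. \<forall>n. u n \<in> {0..1}"
proof (subst AE_all_countable, intro allI)
  fix n
  have "AE x in U. x \<in> {0..1}" unfolding U_def by (rule AE_uniform_measureI) auto
  then have "AE x in distr US.S U (\<lambda>\<omega>. \<omega> n). x \<in> {0..1}" by (simp only: US.PiM_component[OF UNIV_I])
  then have "AE \<omega> in US.S. \<omega> n \<in> {0..1}" by (rule AE_distrD[rotated]) measurable
  then show "AE u in Omega. u n \<in> {0..1}" unfolding Omega_eq .
qed

lemma MM_le1: "x \<in> {0..1} \<Longrightarrow> y \<in> {0..1} \<Longrightarrow> MM x y \<le> 1"
  by (auto simp: MM_def piece1_def piece2_def piece3_def)

lemma seg_le1: "\<forall>n. u n \<in> {0..1} \<Longrightarrow> seg_len u k \<le> 1"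
  by (induction k) (simp_all del: seg_len.simps add: seg_len_Suc' seg_len_0 mult_le_one seg_len_nonneg MM_nonneg MM_le1)

lemma AA_le1: assumes "x \<in> {0..1}" "y \<in> {0..1}" shows "AA x y \<le> 1"
proof -
  let ?a = "piece1 x y" and ?b = "piece2 x y" and ?c = "piece3 x y"
  have r: "?a \<in> {0..1}" "?b \<in> {0..1}" "?c \<in> {0..1}" using assms
    by (auto simp: piece1_def piece2_def piece3_def)
  have s: "(?a + ?b + ?c) / 2 = 1/2" using pieces_sum[of x y] by simp
  have h: "\<bar>1/2 - ?a\<bar> \<le> 1/2" "\<bar>1/2 - ?b\<bar> \<le> 1/2" "\<bar>1/2 - ?c\<bar> \<le> 1/2" using r by (auto split: abs_split)
  have "\<bar>1/2 - ?a\<bar> * \<bar>1/2 - ?b\<bar> * \<bar>1/2 - ?c\<bar> \<le> (1/2) * (1/2) * (1/2)"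
    by (rule mult_mono[OF mult_mono]) (use h in auto)
  then have "\<bar>1/2 * (1/2 - ?a) * (1/2 - ?b) * (1/2 - ?c)\<bar> \<le> 1"
    by (simp add: abs_mult)
  then have "1/2 * (1/2 - ?a) * (1/2 - ?b) * (1/2 - ?c) \<le> 1" by linarith
  then show ?thesis unfolding AA_def tri_area_def Let_def s by simp
qed

lemma solve_fix:
  fixes X :: ennreal
  assumes "X = ennreal a + ennreal b * X" "X \<le> 1" "0 \<le> a" "0 \<le> b" "b < 1"
  shows "X = ennreal (a / (1 - b))"
proof -
  obtain p where p: "X = ennreal p" "0 \<le> p" using assms(2)
    by (metis ennreal_cases ennreal_one_neq_top neq_top_trans)
  have "ennreal p = ennreal (a + b * p)" using assms(1,3,4) p by (simp add: ennreal_mult ennreal_plus)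
  then have "p = a + b * p" using p assms by (subst (asm) ennreal_inj) auto
  then have "p = a / (1 - b)" using assms(5) by (simp add: field_simps)
  then show ?thesis using p by simp
qed

lemma perimeter_main: "has_bochner_integral Omega final_perimeter (1/2)"
proof -
  define P where "P = (\<integral>\<^sup>+u. ennreal (final_perimeter u) \<partial>Omega)"
  have le: "P \<le> 1"
  proof -
    have "P \<le> (\<integral>\<^sup>+u. 1 \<partial>Omega)" unfolding P_def
    proof (rule nn_integral_mono_AE)
      show "AE u in Omega. ennreal (final_perimeter u) \<le> 1" using AE_unit
        by eventually_elim (simp add: perim_eq seg_le1)
    qed
    then show ?thesis using PO.emeasure_space_1 by simp
  qed
  have inner: "(\<integral>\<^sup>+w. ennreal (final_perimeter (cons2 x y w)) \<partial>Omega) = ennreal (gT x y) + ennreal (gM1 x y) * P" for x y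
  proof (cases "tri x y")
    case True
    then show ?thesis using PO.emeasure_space_1 by (simp add: perim_tri gT_def gM1_def)
  next
    case False
    have "(\<integral>\<^sup>+w. ennreal (final_perimeter (cons2 x y w)) \<partial>Omega) = (\<integral>\<^sup>+w. ennreal (MM x y) * ennreal (final_perimeter w) \<partial>Omega)"
      by (rule nn_integral_cong_AE) (use term_AE in \<open>eventually_elim, simp add: perim_ntri False ennreal_mult' MM_nonneg\<close>)
    also have "\<dots> = ennreal (MM x y) * P" unfolding P_def by (simp add: nn_integral_cmult)
    finally show ?thesis using False by (simp add: gT_def gM1_def)
  qed
  have "P = (\<integral>\<^sup>+x. \<integral>\<^sup>+y. \<integral>\<^sup>+w. ennreal (final_perimeter (cons2 x y w)) \<partial>Omega \<partial>U \<partial>U)"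
    unfolding P_def by (rule rec) measurable
  also have "\<dots> = I2 gT + I2 gM1 * P" unfolding inner by (rule I2_lin) measurable
  finally have eq: "P = ennreal (1/4) + ennreal (1/2) * P" by (simp add: I2_gT I2_gM1 mult.commute)
  have "P = ennreal ((1/4) / (1 - 1/2))" using eq le by (intro solve_fix) auto
  then have "P = ennreal (1/2)" by simp
  then show ?thesis unfolding P_def
    by (intro has_bochner_integral_nn_integral) (auto simp: perim_eq seg_len_nonneg)
qed

lemma area_main: "has_bochner_integral Omega final_area (8 * pi / 2205)"
proof -
  define A where "A = (\<integral>\<^sup>+u. ennreal (final_area u) \<partial>Omega)"
  have le: "A \<le> 1"
  proof -
    have "A \<le> (\<integral>\<^sup>+u. 1 \<partial>Omega)" unfolding A_def
    proof (rule nn_integral_mono_AE)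
      have "ennreal (final_area u) \<le> 1" if u: "\<forall>n. u n \<in> {0..1}" for u :: "nat \<Rightarrow> real"
      proof -
        have "(seg_len u (stop_time u))^2 \<le> 1" using seg_le1[OF u] seg_len_nonneg
          by (intro power_le_one) auto
        moreover have "AA (u (2 * stop_time u)) (u (2 * stop_time u + 1)) \<le> 1" using u AA_le1 by blast
        ultimately have "final_area u \<le> 1" unfolding area_eq
          by (metis mult_left_mono mult.right_neutral zero_le_power2 order_trans)
        then show "ennreal (final_area u) \<le> 1" by (simp add: ennreal_le_1)
      qed
      note pt = this
      show "AE u in Omega. ennreal (final_area u) \<le> 1" using AE_unit by eventually_elim (rule pt)
    qed
    then show ?thesis using PO.emeasure_space_1 by simp
  qed
  have inner: "(\<integral>\<^sup>+w. ennreal (final_area (cons2 x y w)) \<partial>Omega) = ennreal (gA x y) + ennreal (gM2 x y) * A" for x y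
  proof (cases "tri x y")
    case True
    then show ?thesis using PO.emeasure_space_1 by (simp add: area_tri gA_def gM2_def)
  next
    case False
    have "(\<integral>\<^sup>+w. ennreal (final_area (cons2 x y w)) \<partial>Omega) = (\<integral>\<^sup>+w. ennreal ((MM x y)^2) * ennreal (final_area w) \<partial>Omega)"
      by (rule nn_integral_cong_AE) (use term_AE in \<open>eventually_elim, simp add: area_ntri False ennreal_mult'\<close>)
    also have "\<dots> = ennreal ((MM x y)^2) * A" unfolding A_def by (simp add: nn_integral_cmult)
    finally show ?thesis using False by (simp add: gA_def gM2_def)
  qed
  have "A = (\<integral>\<^sup>+x. \<integral>\<^sup>+y. \<integral>\<^sup>+w. ennreal (final_area (cons2 x y w)) \<partial>Omega \<partial>U \<partial>U)"
    unfolding A_def by (rule rec) measurable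
  also have "\<dots> = I2 gA + I2 gM2 * A" unfolding inner by (rule I2_lin) measurable
  finally have eq: "A = ennreal (pi/420) + ennreal (11/32) * A" by (simp add: I2_gA I2_gM2 mult.commute)
  have "A = ennreal ((pi/420) / (1 - 11/32))" using eq le by (intro solve_fix) auto
  then have "A = ennreal (8 * pi / 2205)" by simp
  moreover have "AE u in Omega. 0 \<le> final_area u"
    using term_AE
  proof eventually_elim
    case (elim u)
    then have "rel_tri u (stop_time u)" unfolding stop_time_def by (rule LeastI_ex)
    then have "tri (u (2 * stop_time u)) (u (2 * stop_time u + 1))" by (simp add: rel_tri_def tri_def)
    then show ?case unfolding area_eq by (simp add: AA_nonneg)
  qed
  ultimately show ?thesis unfolding A_def
    by (intro has_bochner_integral_nn_integral) auto
qed

theorem mainTheorem1: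
  shows "(AE u in Omega. \<exists>k. rel_tri u k)
       \<and> has_bochner_integral Omega final_perimeter (1/2)
       \<and> has_bochner_integral Omega final_area (8 * pi / 2205)"
  using term_AE perimeter_main area_main by blast

end
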